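(* Let $X$ be a nontrivial real Banach space with dual $X^*$. The following assertions are equivalent: (i) $X$ is weakly octahedral; (ii) whenever $E$ is a finite-dimensional subspace of $X$, $x^*\in B_{X^*}$, and $\varepsilon>0$, there is a $y\in S_X$ such that $\|x+ty\|\geq(1-\varepsilon)(|x^*(x)|+t)$ for all $x\in S_E$ and $t>0$; (ii') whenever $n\in\mathbb{N}$, $x_1,\dots,x_n\in S_X$, $x^*\in B_{X^*}$, and $\varepsilon>0$, there is a $y\in S_X$ such that $\|x_i+ty\|\geq(1-\varepsilon)(|x^*(x_i)|+t)$ for all $i\in\{1,\dots,n\}$ and $t>0$; (iii) whenever $n\in\mathbb{N}$, $x_1,\dots,x_n\in S_X$, $x^*\in B_{X^*}$, and $\varepsilon>0$, there is a $y\in S_X$ such that $\|x_i+ty\|\geq(1-\varepsilon)(|x^*(x_i)|+t)$ for all $i\in\{1,\dots,n\}$ and $t\geq\varepsilon$.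
   Context: $B_X$, $S_X$ denote the closed unit ball and unit sphere of $X$; similarly for $X^*$. The norm on $X$ (or $X$ itself) is called weakly octahedral if for every finite-dimensional subspace $E$ of $X$, every $x^*\in B_{X^*}$, and every $\varepsilon>0$, there is a $y\in S_X$ such that $\|x+y\|\geq(1-\varepsilon)(|x^*(x)|+\|y\|)$ for all $x\in E$. *)

theory Defs
  imports "HOL-Analysis.Analysis"
begin

definition fin_dim_subspace :: "'a::real_normed_vector set \<Rightarrow> bool" where
  "fin_dim_subspace E \<longleftrightarrow> subspace E \<and> (\<exists>B. finite B \<and> span B = E)"

definition weakly_octahedral :: "'a::real_normed_vector itself \<Rightarrow> bool" where
  "weakly_octahedral TYPE('a) \<longleftrightarrow>
     (\<forall>E::'a set. \<forall>xs::'a \<Rightarrow>\<^sub>L real. \<forall>\<epsilon>::real.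
        fin_dim_subspace E \<and> norm xs \<le> 1 \<and> \<epsilon> > 0 \<longrightarrow>
        (\<exists>y. norm y = 1 \<and>
             (\<forall>x\<in>E. norm (x + y) \<ge> (1 - \<epsilon>) * (\<bar>blinfun_apply xs x\<bar> + norm y))))"

end

theory Submission
  imports Defs
begin

lemma dist_bound:
  fixes a w :: "'a::real_normed_vector"
  assumes "w - s *\<^sub>R a \<in> span B"
  shows "\<bar>s\<bar> * infdist a (span B) \<le> norm w"
proof (cases "s = 0")
  case True then show ?thesis by simp
next
  case False
  have p: "(s *\<^sub>R a - w) /\<^sub>R s \<in> span B"
    using span_scale[OF span_neg[OF assms], of "inverse s"] by (simp add: algebra_simps)
  have "infdist a (span B) \<le> dist a ((s *\<^sub>R a - w) /\<^sub>R s)" by (rule infdist_le[OF p])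
  also have "a - (s *\<^sub>R a - w) /\<^sub>R s = w /\<^sub>R s" using False by (simp add: algebra_simps)
  hence "dist a ((s *\<^sub>R a - w) /\<^sub>R s) = norm w / \<bar>s\<bar>" by (simp add: dist_norm divide_inverse_commute)
  finally have "infdist a (span B) \<le> norm w / \<bar>s\<bar>" .
  then show ?thesis using False by (simp add: field_simps)
qed

lemma closed_span_fin:
  fixes B :: "'a::real_normed_vector set"
  assumes "finite B"
  shows "closed (span B)"
  using assms
proof (induction B rule: finite_induct)
  case empty
  then show ?case by simp
next
  case (insert a B)
  show ?case
  proof (cases "a \<in> span B")
    case True
    then have "span (insert a B) = span B" by (simp add: span_redundant)
    then show ?thesis using insert by simp
  next
    case False
    define d where "d = infdist a (span B)"
    have dpos: "d > 0" unfolding d_def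
      by (rule infdist_pos_not_in_closed[OF insert.IH _ False]) (use span_zero in auto)
    show ?thesis
    proof (subst closed_sequential_limits, intro allI impI, elim conjE)
      fix x l assume xin: "\<forall>n. x n \<in> span (insert a B)" and lim: "x \<longlonglongrightarrow> l"
      have "\<forall>n. \<exists>t. x n - t *\<^sub>R a \<in> span B" using xin by (simp add: span_insert)
      then obtain t where t: "\<And>n. x n - t n *\<^sub>R a \<in> span B" by metis
      have tb: "\<bar>t m - t n\<bar> * d \<le> norm (x m - x n)" for m n
      proof -
        have "(x m - x n) - (t m - t n) *\<^sub>R a \<in> span B"
          using span_diff[OF t[of m] t[of n]] by (simp add: algebra_simps)
        then show ?thesis using dist_bound d_def by blast
      qed
      have "Cauchy x" using lim by (rule LIMSEQ_imp_Cauchy)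
      have "Cauchy t"
      proof (rule metric_CauchyI)
        fix e :: real assume "e > 0"
        then have "e * d > 0" using dpos by simp
        then obtain M where M: "\<And>m n. m \<ge> M \<Longrightarrow> n \<ge> M \<Longrightarrow> dist (x m) (x n) < e * d"
          using \<open>Cauchy x\<close> metric_CauchyD by blast
        show "\<exists>M. \<forall>m\<ge>M. \<forall>n\<ge>M. dist (t m) (t n) < e"
        proof (intro exI allI impI)
          fix m n assume "m \<ge> M" "n \<ge> M"
          then have "\<bar>t m - t n\<bar> * d < e * d" using tb[of m n] M[of m n] by (simp add: dist_norm)
          then show "dist (t m) (t n) < e" using dpos by (simp add: dist_real_def)
        qed
      qed
      then obtain \<tau> where tau: "t \<longlonglongrightarrow> \<tau>" using Cauchy_convergent_iff convergent_def by blast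
      have "(\<lambda>n. x n - t n *\<^sub>R a) \<longlonglongrightarrow> l - \<tau> *\<^sub>R a"
        by (intro tendsto_intros lim tau)
      then have "l - \<tau> *\<^sub>R a \<in> span B"
        by (rule closed_sequentially[OF insert.IH, rotated]) (use t in blast)
      then show "l \<in> span (insert a B)" by (auto simp: span_insert)
    qed
  qed
qed

lemma compact_span_cball:
  fixes B :: "'a::real_normed_vector set"
  assumes "finite B"
  shows "compact (span B \<inter> cball 0 R)"
  using assms
proof (induction B arbitrary: R rule: finite_induct)
  case empty
  have "span ({}::'a set) \<inter> cball 0 R \<subseteq> {0}" by simp
  then have "span ({}::'a set) \<inter> cball 0 R = {} \<or> span ({}::'a set) \<inter> cball 0 R = {0}" by blast
  then show ?case by auto
next
  case (insert a B)
  show ?case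
  proof (cases "a \<in> span B")
    case True
    then have "span (insert a B) = span B" by (simp add: span_redundant)
    then show ?thesis using insert by simp
  next
    case False
    define d where "d = infdist a (span B)"
    have dpos: "d > 0" unfolding d_def
      by (rule infdist_pos_not_in_closed[OF closed_span_fin[OF insert.hyps(1)] _ False]) (use span_zero in auto)
    define R' where "R' = \<bar>R\<bar> + \<bar>R\<bar> / d * norm a"
    define S where "S = {x + y | x y. x \<in> span B \<inter> cball 0 R' \<and> y \<in> (\<lambda>s. s *\<^sub>R a) ` {-\<bar>R\<bar>/d..\<bar>R\<bar>/d}}"
    have cS: "compact S" unfolding S_def
      by (intro compact_sums insert.IH compact_continuous_image continuous_intros compact_Icc)
    have sub: "span (insert a B) \<inter> cball 0 R \<subseteq> S"
    proof
      fix x assume x: "x \<in> span (insert a B) \<inter> cball 0 R"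
      then obtain t where t: "x - t *\<^sub>R a \<in> span B" by (auto simp: span_insert)
      have nx: "norm x \<le> \<bar>R\<bar>" using x by auto
      have "\<bar>t\<bar> * d \<le> norm x" using dist_bound[OF t] d_def by simp
      then have "\<bar>t\<bar> * d \<le> \<bar>R\<bar>" using nx by linarith
      then have tR: "\<bar>t\<bar> \<le> \<bar>R\<bar> / d" using dpos by (simp add: field_simps)
      have "norm (x - t *\<^sub>R a) \<le> norm x + \<bar>t\<bar> * norm a"
        by (metis norm_scaleR norm_triangle_ineq4)
      also have "\<dots> \<le> \<bar>R\<bar> + \<bar>R\<bar> / d * norm a"
        using nx tR by (intro add_mono mult_right_mono) auto
      finally have "x - t *\<^sub>R a \<in> span B \<inter> cball 0 R'" using t by (simp add: R'_def)
      moreover have "t *\<^sub>R a \<in> (\<lambda>s. s *\<^sub>R a) ` {-\<bar>R\<bar>/d..\<bar>R\<bar>/d}" using tR by (intro imageI) (auto simp: abs_le_iff)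
      ultimately show "x \<in> S" unfolding S_def by force
    qed
    have "span (insert a B) \<inter> cball 0 R = S \<inter> (span (insert a B) \<inter> cball 0 R)" using sub by blast
    moreover have "compact (S \<inter> (span (insert a B) \<inter> cball 0 R))"
      using cS closed_span_fin[of "insert a B"] insert.hyps(1)
      by (intro compact_Int_closed closed_Int) auto
    ultimately show ?thesis by simp
  qed
qed

lemma compact_net:
  fixes K :: "'a::metric_space set"
  assumes "compact K" "\<delta> > 0"
  shows "\<exists>N. finite N \<and> N \<subseteq> K \<and> (\<forall>u\<in>K. \<exists>v\<in>N. dist u v < \<delta>)"
proof -
  have "K \<subseteq> (\<Union>v\<in>K. ball v \<delta>)" using assms(2) by auto
  then obtain N where "N \<subseteq> K" "finite N" "K \<subseteq> (\<Union>v\<in>N. ball v \<delta>)"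
    using compactE_image[OF assms(1), of K "\<lambda>v. ball v \<delta>"] by auto
  moreover have "\<forall>u\<in>K. \<exists>v\<in>N. dist u v < \<delta>"
  proof
    fix u assume "u \<in> K"
    with \<open>K \<subseteq> (\<Union>v\<in>N. ball v \<delta>)\<close> obtain v where "v \<in> N" "u \<in> ball v \<delta>" by blast
    then show "\<exists>v\<in>N. dist u v < \<delta>" by (auto simp: dist_commute)
  qed
  ultimately show ?thesis by blast
qed

theorem proposition2p5:
  assumes nontriv: "\<exists>z::'a::banach. z \<noteq> 0"
  shows
   "(weakly_octahedral TYPE('a) \<longleftrightarrow>
      (\<forall>E::'a set. \<forall>xs::'a \<Rightarrow>\<^sub>L real. \<forall>\<epsilon>::real.
         fin_dim_subspace E \<and> norm xs \<le> 1 \<and> \<epsilon> > 0 \<longrightarrow>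
         (\<exists>y::'a. norm y = 1 \<and>
            (\<forall>x\<in>E. \<forall>t::real. norm x = 1 \<and> t > 0 \<longrightarrow>
               norm (x + t *\<^sub>R y) \<ge> (1 - \<epsilon>) * (\<bar>blinfun_apply xs x\<bar> + t)))))
    \<and> (weakly_octahedral TYPE('a) \<longleftrightarrow>
      (\<forall>n::nat. \<forall>x::nat \<Rightarrow> 'a. \<forall>xs::'a \<Rightarrow>\<^sub>L real. \<forall>\<epsilon>::real.
         n \<ge> 1 \<and> (\<forall>i\<in>{1..n}. norm (x i) = 1) \<and> norm xs \<le> 1 \<and> \<epsilon> > 0 \<longrightarrow>
         (\<exists>y::'a. norm y = 1 \<and>
            (\<forall>i\<in>{1..n}. \<forall>t::real. t > 0 \<longrightarrow>
               norm (x i + t *\<^sub>R y) \<ge> (1 - \<epsilon>) * (\<bar>blinfun_apply xs (x i)\<bar> + t)))))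
    \<and> (weakly_octahedral TYPE('a) \<longleftrightarrow>
      (\<forall>n::nat. \<forall>x::nat \<Rightarrow> 'a. \<forall>xs::'a \<Rightarrow>\<^sub>L real. \<forall>\<epsilon>::real.
         n \<ge> 1 \<and> (\<forall>i\<in>{1..n}. norm (x i) = 1) \<and> norm xs \<le> 1 \<and> \<epsilon> > 0 \<longrightarrow>
         (\<exists>y::'a. norm y = 1 \<and>
            (\<forall>i\<in>{1..n}. \<forall>t::real. t \<ge> \<epsilon> \<longrightarrow>
               norm (x i + t *\<^sub>R y) \<ge> (1 - \<epsilon>) * (\<bar>blinfun_apply xs (x i)\<bar> + t)))))"
  (is "(?W = ?A) \<and> (?W = ?B) \<and> (?W = ?C)")
proof -
  have WA: "?A" if W: "?W"
  proof (intro allI impI, elim conjE)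
    fix E :: "'a set" and xs :: "'a \<Rightarrow>\<^sub>L real" and \<epsilon> :: real
    assume fd: "fin_dim_subspace E" and nxs: "norm xs \<le> 1" and ep: "\<epsilon> > 0"
    obtain y where y1: "norm y = 1" and
      yE: "\<And>x. x \<in> E \<Longrightarrow> norm (x + y) \<ge> (1 - \<epsilon>) * (\<bar>blinfun_apply xs x\<bar> + norm y)"
      using W fd nxs ep unfolding weakly_octahedral_def by blast
    have sE: "subspace E" using fd unfolding fin_dim_subspace_def by blast
    show "\<exists>y::'a. norm y = 1 \<and>
            (\<forall>x\<in>E. \<forall>t::real. norm x = 1 \<and> t > 0 \<longrightarrow>
               norm (x + t *\<^sub>R y) \<ge> (1 - \<epsilon>) * (\<bar>blinfun_apply xs x\<bar> + t))"
    proof (intro exI[of _ y] conjI ballI allI impI)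
      show "norm y = 1" by (rule y1)
      fix x and t :: real assume xE: "x \<in> E" and xt: "norm x = 1 \<and> t > 0"
      then have tp: "t > 0" by simp
      have "x /\<^sub>R t \<in> E" using sE xE by (simp add: subspace_scale)
      then have h: "norm (x /\<^sub>R t + y) \<ge> (1 - \<epsilon>) * (\<bar>blinfun_apply xs (x /\<^sub>R t)\<bar> + 1)"
        using yE y1 by simp
      have e1: "x + t *\<^sub>R y = t *\<^sub>R (x /\<^sub>R t + y)" using tp by (simp add: algebra_simps)
      have e2: "\<bar>blinfun_apply xs (x /\<^sub>R t)\<bar> = \<bar>blinfun_apply xs x\<bar> / t"
        using tp by (simp add: blinfun.scaleR_right abs_mult divide_inverse_commute)
      have "(1 - \<epsilon>) * (\<bar>blinfun_apply xs x\<bar> + t) = t * ((1 - \<epsilon>) * (\<bar>blinfun_apply xs (x /\<^sub>R t)\<bar> + 1))"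
        unfolding e2 using tp by (simp add: field_simps)
      also have "\<dots> \<le> t * norm (x /\<^sub>R t + y)" using h tp by (simp add: mult_left_mono)
      also have "\<dots> = norm (x + t *\<^sub>R y)" using tp by (simp add: e1)
      finally show "norm (x + t *\<^sub>R y) \<ge> (1 - \<epsilon>) * (\<bar>blinfun_apply xs x\<bar> + t)" .
    qed
  qed
  have AB: "?B" if A: "?A"
  proof (intro allI impI, elim conjE)
    fix n :: nat and x :: "nat \<Rightarrow> 'a" and xs :: "'a \<Rightarrow>\<^sub>L real" and \<epsilon> :: real
    assume n1: "n \<ge> 1" and nx: "\<forall>i\<in>{1..n}. norm (x i) = 1" and nxs: "norm xs \<le> 1" and ep: "\<epsilon> > 0"
    have fd: "fin_dim_subspace (span (x ` {1..n}))"
      unfolding fin_dim_subspace_def by (auto intro: subspace_span)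
    obtain y where y1: "norm y = 1" and
      yE: "\<And>z t. z \<in> span (x ` {1..n}) \<Longrightarrow> norm z = 1 \<and> t > 0 \<Longrightarrow>
               norm (z + t *\<^sub>R y) \<ge> (1 - \<epsilon>) * (\<bar>blinfun_apply xs z\<bar> + t)"
      using A[rule_format, OF conjI[OF fd conjI[OF nxs ep]]] by blast
    show "\<exists>y::'a. norm y = 1 \<and>
            (\<forall>i\<in>{1..n}. \<forall>t::real. t > 0 \<longrightarrow>
               norm (x i + t *\<^sub>R y) \<ge> (1 - \<epsilon>) * (\<bar>blinfun_apply xs (x i)\<bar> + t))"
      using y1 yE nx by (intro exI[of _ y]) (auto intro: span_base)
  qed
  have BC: "?C" if B: "?B"
  proof (intro allI impI, elim conjE)
    fix n :: nat and x :: "nat \<Rightarrow> 'a" and xs :: "'a \<Rightarrow>\<^sub>L real" and \<epsilon> :: real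
    assume n1: "n \<ge> 1" and nx: "\<forall>i\<in>{1..n}. norm (x i) = 1" and nxs: "norm xs \<le> 1" and ep: "\<epsilon> > 0"
    obtain y where "norm y = 1" and
      yE: "\<forall>i\<in>{1..n}. \<forall>t::real. t > 0 \<longrightarrow>
               norm (x i + t *\<^sub>R y) \<ge> (1 - \<epsilon>) * (\<bar>blinfun_apply xs (x i)\<bar> + t)"
      using B n1 nx nxs ep by blast
    then show "\<exists>y::'a. norm y = 1 \<and>
            (\<forall>i\<in>{1..n}. \<forall>t::real. t \<ge> \<epsilon> \<longrightarrow>
               norm (x i + t *\<^sub>R y) \<ge> (1 - \<epsilon>) * (\<bar>blinfun_apply xs (x i)\<bar> + t))"
      using ep by (intro exI[of _ y]) auto
  qed
  have CW: "?W" if C: "?C"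
    unfolding weakly_octahedral_def
  proof (intro allI impI, elim conjE)
    fix E :: "'a set" and xs :: "'a \<Rightarrow>\<^sub>L real" and \<epsilon> :: real
    assume fd: "fin_dim_subspace E" and nxs: "norm xs \<le> 1" and ep: "\<epsilon> > 0"
    obtain z where "z \<noteq> (0::'a)" using nontriv by blast
    define z0 where "z0 = z /\<^sub>R norm z"
    have z01: "norm z0 = 1" using \<open>z \<noteq> 0\<close> by (simp add: z0_def)
    have xsb: "\<bar>blinfun_apply xs v\<bar> \<le> norm v" for v
      using norm_blinfun[of xs v] nxs
      by (metis dual_order.trans mult_left_le_one_le mult.commute norm_ge_zero real_norm_def)
    show "\<exists>y. norm y = 1 \<and> (\<forall>x\<in>E. (1 - \<epsilon>) * (\<bar>blinfun_apply xs x\<bar> + norm y) \<le> norm (x + y))"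
    proof (cases "\<epsilon> \<ge> 1")
      case True
      show ?thesis
      proof (intro exI[of _ z0] conjI ballI)
        fix x assume "x \<in> E"
        have "(1 - \<epsilon>) * (\<bar>blinfun_apply xs x\<bar> + norm z0) \<le> 0"
          using True by (intro mult_nonpos_nonneg) auto
        then show "(1 - \<epsilon>) * (\<bar>blinfun_apply xs x\<bar> + norm z0) \<le> norm (x + z0)"
          using norm_ge_zero order_trans by blast
      qed (rule z01)
    next
      case False
      then have e1: "\<epsilon> < 1" by simp
      obtain B where fB: "finite B" and BE: "span B = E" using fd unfolding fin_dim_subspace_def by blast
      define K where "K = (span B \<inter> cball 0 1) \<inter> {v::'a. norm v = 1}"
      have c1: "compact (span B \<inter> cball (0::'a) 1)" by (rule compact_span_cball[OF fB])
      have cK: "compact K" unfolding K_def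
        by (rule compact_Int_closed[OF c1]) (intro closed_Collect_eq continuous_intros)
      define \<epsilon>' where "\<epsilon>' = \<epsilon> / 2"
      define \<delta> where "\<delta> = \<epsilon>' * (\<epsilon> - \<epsilon>') / 2"
      have dpos: "\<delta> > 0" using ep by (simp add: \<delta>_def \<epsilon>'_def)
      have e'pos: "\<epsilon>' > 0" "\<epsilon>' < 1" using ep e1 by (auto simp: \<epsilon>'_def)
      obtain N where fN: "finite N" and NK: "N \<subseteq> K" and net: "\<And>u. u \<in> K \<Longrightarrow> \<exists>v\<in>N. dist u v < \<delta>"
        using compact_net[OF cK dpos] by blast
      define N' where "N' = insert z0 N"
      have fN': "finite N'" using fN by (simp add: N'_def)
      obtain m f where Nf: "N' = f ` {i. i < (m::nat)}"
        using finite_imp_nat_seg_image_inj_on[OF fN'] by blast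
      have m1: "m \<ge> 1"
      proof (rule ccontr)
        assume "\<not> m \<ge> 1" then have "m = 0" by simp
        then show False using Nf by (simp add: N'_def)
      qed
      define x where "x i = f (i - 1)" for i
      have xN': "x i \<in> N'" if "i \<in> {1..m}" for i
        using that Nf unfolding x_def by auto
      have N'x: "\<exists>i\<in>{1..m}. v = x i" if vN': "v \<in> N'" for v
      proof -
        obtain j where "j < m" "v = f j" using vN' Nf by auto
        then show ?thesis by (intro bexI[of _ "Suc j"]) (auto simp: x_def)
      qed
      have nx: "\<forall>i\<in>{1..m}. norm (x i) = 1"
      proof
        fix i assume "i \<in> {1..m}"
        then have "x i = z0 \<or> x i \<in> N" using xN' by (simp add: N'_def)
        then show "norm (x i) = 1" using NK z01 unfolding K_def by blast
      qed
      obtain y where y1: "norm y = 1" and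
        yC: "\<And>i t. i \<in> {1..m} \<Longrightarrow> t \<ge> \<epsilon>' \<Longrightarrow>
               norm (x i + t *\<^sub>R y) \<ge> (1 - \<epsilon>') * (\<bar>blinfun_apply xs (x i)\<bar> + t)"
        using C[rule_format, of m x xs \<epsilon>'] m1 nx nxs e'pos by blast
      have key: "norm (u + t *\<^sub>R y) \<ge> (1 - \<epsilon>) * (\<bar>blinfun_apply xs u\<bar> + t)"
        if uK: "u \<in> K" and tp: "t > 0" for u t
      proof -
        have nu: "norm u = 1" using uK by (simp add: K_def)
        have xu: "\<bar>blinfun_apply xs u\<bar> \<le> 1" using xsb[of u] nu by simp
        show ?thesis
        proof (cases "t < \<epsilon>'")
          case True
          have "norm u - norm (t *\<^sub>R y) \<le> norm (u + t *\<^sub>R y)" by (rule norm_diff_ineq)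
          then have lo: "1 - t \<le> norm (u + t *\<^sub>R y)" using nu y1 tp by simp
          have "(1 - \<epsilon>) * (\<bar>blinfun_apply xs u\<bar> + t) \<le> (1 - \<epsilon>) * (1 + t)"
            using e1 xu by (intro mult_left_mono) auto
          also have "\<dots> = 1 + t - \<epsilon> - \<epsilon> * t" by (simp add: algebra_simps)
          also have "\<dots> \<le> 1 - t"
          proof -
            have "\<epsilon> * t \<ge> 0" using ep tp by simp
            then show ?thesis using True by (simp add: \<epsilon>'_def)
          qed
          finally show ?thesis using lo by linarith
        next
          case False
          then have te: "t \<ge> \<epsilon>'" by simp
          obtain v where vN: "v \<in> N" and uv: "dist u v < \<delta>" using net[OF uK] by blast
          then obtain i where i: "i \<in> {1..m}" "v = x i" using N'x[of v] by (auto simp: N'_def)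
          have h: "norm (v + t *\<^sub>R y) \<ge> (1 - \<epsilon>') * (\<bar>blinfun_apply xs v\<bar> + t)"
            using yC[OF i(1) te] i(2) by simp
          have nuv: "norm (u - v) < \<delta>" using uv by (simp add: dist_norm)
          have "norm (v + t *\<^sub>R y) \<le> norm (u + t *\<^sub>R y) + norm (v - u)"
            using norm_triangle_ineq[of "u + t *\<^sub>R y" "v - u"] by (simp add: algebra_simps)
          then have h1: "norm (v + t *\<^sub>R y) \<le> norm (u + t *\<^sub>R y) + \<delta>"
            using nuv by (simp add: norm_minus_commute)
          have "\<bar>blinfun_apply xs u - blinfun_apply xs v\<bar> \<le> norm (u - v)"
            using xsb[of "u - v"] by (simp add: blinfun.diff_right)
          then have h2: "\<bar>blinfun_apply xs v\<bar> \<ge> \<bar>blinfun_apply xs u\<bar> - \<delta>" using nuv by linarith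
          have "(1 - \<epsilon>') * (\<bar>blinfun_apply xs u\<bar> - \<delta> + t) \<le> (1 - \<epsilon>') * (\<bar>blinfun_apply xs v\<bar> + t)"
            using h2 e'pos by (intro mult_left_mono) auto
          moreover have "(1 - \<epsilon>') * (\<bar>blinfun_apply xs u\<bar> - \<delta> + t) =
               (1 - \<epsilon>') * (\<bar>blinfun_apply xs u\<bar> + t) - (1 - \<epsilon>') * \<delta>" by (simp add: algebra_simps)
          moreover have "(1 - \<epsilon>') * \<delta> \<le> \<delta>" using e'pos dpos by simp
          ultimately have h3: "norm (u + t *\<^sub>R y) \<ge> (1 - \<epsilon>') * (\<bar>blinfun_apply xs u\<bar> + t) - 2 * \<delta>"
            using h h1 by linarith
          have "(\<epsilon> - \<epsilon>') * \<epsilon>' \<le> (\<epsilon> - \<epsilon>') * (\<bar>blinfun_apply xs u\<bar> + t)"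
            using te ep by (intro mult_left_mono) (auto simp: \<epsilon>'_def)
          moreover have "(1 - \<epsilon>) * (\<bar>blinfun_apply xs u\<bar> + t) =
               (1 - \<epsilon>') * (\<bar>blinfun_apply xs u\<bar> + t) - (\<epsilon> - \<epsilon>') * (\<bar>blinfun_apply xs u\<bar> + t)"
            by (simp add: algebra_simps)
          moreover have "2 * \<delta> = (\<epsilon> - \<epsilon>') * \<epsilon>'" by (simp add: \<delta>_def)
          ultimately show ?thesis using h3 by linarith
        qed
      qed
      show ?thesis
      proof (intro exI[of _ y] conjI ballI)
        show "norm y = 1" by (rule y1)
        fix w assume wE: "w \<in> E"
        show "(1 - \<epsilon>) * (\<bar>blinfun_apply xs w\<bar> + norm y) \<le> norm (w + y)"
        proof (cases "w = 0")
          case True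
          then show ?thesis using y1 ep by simp
        next
          case False
          define s where "s = norm w"
          have sp: "s > 0" using False by (simp add: s_def)
          define u where "u = w /\<^sub>R s"
          have uK: "u \<in> K" unfolding K_def u_def
            using wE BE sp by (auto simp: s_def intro: span_scale)
          have k: "norm (u + (1/s) *\<^sub>R y) \<ge> (1 - \<epsilon>) * (\<bar>blinfun_apply xs u\<bar> + 1/s)"
            using key[OF uK] sp by simp
          have eq1: "w + y = s *\<^sub>R (u + (1/s) *\<^sub>R y)" using sp by (simp add: u_def algebra_simps)
          have eq2: "\<bar>blinfun_apply xs w\<bar> = s * \<bar>blinfun_apply xs u\<bar>"
            using sp by (simp add: u_def blinfun.scaleR_right abs_mult)
          have "(1 - \<epsilon>) * (\<bar>blinfun_apply xs w\<bar> + norm y) = s * ((1 - \<epsilon>) * (\<bar>blinfun_apply xs u\<bar> + 1/s))"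
            unfolding eq2 using sp y1 by (simp add: field_simps)
          also have "\<dots> \<le> s * norm (u + (1/s) *\<^sub>R y)" using k sp by (simp add: mult_left_mono)
          also have "\<dots> = norm (w + y)" using sp by (simp add: eq1)
          finally show ?thesis .
        qed
      qed
    qed
  qed
  show ?thesis using WA AB BC CW by blast
qed

end
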